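(* Let $1<n\leq m$ and let $v\in Z_{n,m}$ with $\sum_{i\in I_c(v)}v_i=n$. Then $d(v,0)\leq\sum_{i=1}^{p_l(v)}i+\sum_{i=1}^{m-p_r(v)}i+\lfloor\frac{n(m+1)}{2}\rfloor$.
   Context: Elements of $\mathbb{Z}_n$ are identified with representatives in $\{0,\dots,n-1\}$ (so $v_0,v_{m+1}$ are such integers in sums). $Z_{n,m}$ has vertices $u=(u_0,\dots,u_{m+1})\in\mathbb{Z}_n\times\{-1,0,1\}^m\times\mathbb{Z}_n$ with $\sum u_i\equiv0\pmod n$; $u,v$ adjacent if there is $0\leq i\leq m$ with $u_j=v_j$ for $j\notin\{i,i+1\}$ and either ($u_i=v_i+1$, $u_{i+1}=v_{i+1}-1$) or ($u_i=v_i-1$, $u_{i+1}=v_{i+1}+1$), arithmetic in coordinates $0,m+1$ in $\mathbb{Z}_n$. $d$ is graph distance, $0$ the all-zero vertex. $\operatorname{Piv}(v)$ is the set of integers $-1\le p\le m+1$ with $n\mid\sum_{i=0}^pv_i$ (empty sum $0$). $p_l(v)=\max\{p\in\operatorname{Piv}(v):p<\frac m2\}$, $p_r(v)=\min\{p\in\operatorname{Piv}(v):p\ge\frac m2\}$, $I_c(v)=\{p_l(v)+1,\dots,p_r(v)\}$. Sums $\sum_{i=1}^k i$ with $k\le0$ are $0$. *)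

theory Defs
  imports Main "HOL-Library.Extended_Nat"
begin

text \<open>Vertices of Z_{n,m} are represented as functions u :: nat => int with
  u 0, u (m+1) in {0..n-1} (representatives of Z_n), u i in {-1,0,1} for 1 <= i <= m,
  u i = 0 for i > m+1, and sum of u_0..u_{m+1} divisible by n.\<close>

definition Zvert :: "nat \<Rightarrow> nat \<Rightarrow> (nat \<Rightarrow> int) \<Rightarrow> bool" where
  "Zvert n m u \<longleftrightarrow>
     u 0 \<in> {0..<int n} \<and> u (m+1) \<in> {0..<int n} \<and>
     (\<forall>i\<in>{1..m}. u i \<in> {-1,0,1}) \<and>
     (\<forall>i>m+1. u i = 0) \<and>
     int n dvd (\<Sum>i\<le>m+1. u i)"

definition coord_eq :: "nat \<Rightarrow> nat \<Rightarrow> nat \<Rightarrow> int \<Rightarrow> int \<Rightarrow> int \<Rightarrow> bool" where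
  "coord_eq n m c a b d \<longleftrightarrow>
     (if c = 0 \<or> c = m+1 then a mod int n = (b + d) mod int n else a = b + d)"

definition Zadj :: "nat \<Rightarrow> nat \<Rightarrow> (nat \<Rightarrow> int) \<Rightarrow> (nat \<Rightarrow> int) \<Rightarrow> bool" where
  "Zadj n m u v \<longleftrightarrow> Zvert n m u \<and> Zvert n m v \<and>
     (\<exists>i\<le>m. (\<forall>j\<le>m+1. j \<notin> {i, i+1} \<longrightarrow> u j = v j) \<and>
        ((coord_eq n m i (u i) (v i) 1 \<and> coord_eq n m (i+1) (u (i+1)) (v (i+1)) (-1)) \<or>
         (coord_eq n m i (u i) (v i) (-1) \<and> coord_eq n m (i+1) (u (i+1)) (v (i+1)) 1)))"

definition Zwalk :: "nat \<Rightarrow> nat \<Rightarrow> (nat \<Rightarrow> int) \<Rightarrow> (nat \<Rightarrow> int) \<Rightarrow> nat \<Rightarrow> bool" where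
  "Zwalk n m u v k \<longleftrightarrow> (\<exists>f :: nat \<Rightarrow> nat \<Rightarrow> int.
     f 0 = u \<and> f k = v \<and> (\<forall>i\<le>k. Zvert n m (f i)) \<and> (\<forall>i<k. Zadj n m (f i) (f (Suc i))))"

text \<open>Graph distance (infinite if no walk exists).\<close>
definition Zdist :: "nat \<Rightarrow> nat \<Rightarrow> (nat \<Rightarrow> int) \<Rightarrow> (nat \<Rightarrow> int) \<Rightarrow> enat" where
  "Zdist n m u v = (INF k \<in> {k. Zwalk n m u v k}. enat k)"

definition Zzero :: "nat \<Rightarrow> int" where "Zzero = (\<lambda>_. 0)"

definition Piv :: "nat \<Rightarrow> nat \<Rightarrow> (nat \<Rightarrow> int) \<Rightarrow> int set" where
  "Piv n m v = {p. -1 \<le> p \<and> p \<le> int m + 1 \<and> int n dvd (\<Sum>i\<in>{0..p}. v (nat i))}"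

definition p_l :: "nat \<Rightarrow> nat \<Rightarrow> (nat \<Rightarrow> int) \<Rightarrow> int" where
  "p_l n m v = Max {p \<in> Piv n m v. 2 * p < int m}"

definition p_r :: "nat \<Rightarrow> nat \<Rightarrow> (nat \<Rightarrow> int) \<Rightarrow> int" where
  "p_r n m v = Min {p \<in> Piv n m v. 2 * p \<ge> int m}"

definition I_c :: "nat \<Rightarrow> nat \<Rightarrow> (nat \<Rightarrow> int) \<Rightarrow> int set" where
  "I_c n m v = {p_l n m v + 1 .. p_r n m v}"

end

theory Submission imports Defs begin

definition pre :: "(nat \<Rightarrow> int) \<Rightarrow> nat \<Rightarrow> int" where
  "pre v i = (\<Sum>j\<le>i. v j)"

definition Lsum :: "nat \<Rightarrow> (nat \<Rightarrow> int) \<Rightarrow> int \<Rightarrow> int" where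
  "Lsum m v K = (\<Sum>i\<le>m. \<bar>pre v i - K\<bar>)"

lemma zwalk_zero: "Zvert n m v \<Longrightarrow> Zwalk n m v v 0"
  unfolding Zwalk_def by (rule exI[of _ "\<lambda>_. v"]) auto

lemma zwalk_cons:
  assumes a: "Zadj n m v w" and wk: "Zwalk n m w z k"
  shows "Zwalk n m v z (Suc k)"
proof -
  obtain f where f: "f 0 = w" "f k = z" "\<forall>i\<le>k. Zvert n m (f i)" "\<forall>i<k. Zadj n m (f i) (f (Suc i))"
    using wk unfolding Zwalk_def by blast
  define g where "g = (\<lambda>i. if i = 0 then v else f (i - 1))"
  have "g 0 = v" "g (Suc k) = z" using f by (auto simp: g_def)
  moreover have "\<forall>i\<le>Suc k. Zvert n m (g i)"
  proof (intro allI impI)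
    fix i assume "i \<le> Suc k"
    then show "Zvert n m (g i)" using f a by (cases i) (auto simp: g_def Zadj_def)
  qed
  moreover have "\<forall>i<Suc k. Zadj n m (g i) (g (Suc i))"
  proof (intro allI impI)
    fix i assume "i < Suc k"
    then show "Zadj n m (g i) (g (Suc i))" using f a by (cases i) (auto simp: g_def)
  qed
  ultimately show ?thesis unfolding Zwalk_def by blast
qed

lemma mod_diff_dvd: "int n dvd (x mod int n - x)"
  by (metis mod_eq_dvd_iff mod_mod_trivial)

lemma move:
  assumes vv: "Zvert n m v" and n1: "1 < n" and m1: "1 \<le> m" and i0: "i0 \<le> m"
    and d: "d = 1 \<or> d = -1"
    and l: "1 \<le> i0 \<Longrightarrow> v i0 + d \<in> {-1,0,1}"
    and r: "i0 < m \<Longrightarrow> v (Suc i0) - d \<in> {-1,0,1}"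
  shows "\<exists>w \<alpha>. Zadj n m v w \<and> int n dvd \<alpha> \<and>
     (\<forall>i\<le>m. pre w i = pre v i + (if i = i0 then d else 0) + \<alpha>)"
proof -
  define \<alpha> where "\<alpha> = (if i0 = 0 then (v 0 + d) mod int n - (v 0 + d) else 0)"
  define \<beta> where "\<beta> = (if i0 = m then (v (Suc m) - d) mod int n - (v (Suc m) - d) else 0)"
  define w where "w = (\<lambda>j. v j + (if j = i0 then d + \<alpha> else 0) + (if j = Suc i0 then \<beta> - d else 0))"
  have da: "int n dvd \<alpha>" unfolding \<alpha>_def using mod_diff_dvd by auto
  have db: "int n dvd \<beta>" unfolding \<beta>_def using mod_diff_dvd by auto
  have np: "0 < int n" using n1 by simp
  have w0: "w 0 \<in> {0..<int n}"
  proof (cases "i0 = 0")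
    case True
    then have "w 0 = (v 0 + d) mod int n" by (simp add: w_def \<alpha>_def)
    then show ?thesis using np by simp
  next
    case False
    then show ?thesis using vv by (simp add: w_def Zvert_def)
  qed
  have wm: "w (m+1) \<in> {0..<int n}"
  proof (cases "i0 = m")
    case True
    then have "w (m+1) = (v (Suc m) - d) mod int n" using m1 by (simp add: w_def \<beta>_def)
    then show ?thesis using np by simp
  next
    case False
    then show ?thesis using vv i0 by (simp add: w_def Zvert_def)
  qed
  have wmid: "\<forall>i\<in>{1..m}. w i \<in> {-1,0,1}"
  proof
    fix j assume j: "j \<in> {1..m}"
    show "w j \<in> {-1,0,1}"
    proof (cases "j = i0")
      case True
      then have "w j = v j + d" using j by (simp add: w_def \<alpha>_def)
      then show ?thesis using l True j by simp
    next
      case False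
      show ?thesis
      proof (cases "j = Suc i0")
        case True
        then have "i0 < m" using j by simp
        then have "w j = v j - d" using True by (simp add: w_def \<beta>_def)
        then show ?thesis using r True \<open>i0 < m\<close> by simp
      next
        case False
        then have "w j = v j" using \<open>j \<noteq> i0\<close> by (simp add: w_def)
        then show ?thesis using vv j by (simp add: Zvert_def)
      qed
    qed
  qed
  have whi: "\<forall>i>m+1. w i = 0" using vv i0 by (simp add: w_def Zvert_def)
  have sumw: "(\<Sum>i\<le>m+1. w i) = (\<Sum>i\<le>m+1. v i) + \<alpha> + \<beta>"
    using i0 by (simp add: w_def sum.distrib)
  have wd: "int n dvd (\<Sum>i\<le>m+1. w i)" unfolding sumw using vv da db
    by (simp add: Zvert_def)
  have zw: "Zvert n m w" unfolding Zvert_def using w0 wm wmid whi wd by blast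
  have ce1: "coord_eq n m i0 (v i0) (w i0) (- d)"
  proof (cases "i0 = 0")
    case True
    then have "w i0 = v i0 + d + \<alpha>" by (simp add: w_def)
    then show ?thesis using True da
      by (simp add: coord_eq_def mod_eq_dvd_iff)
  next
    case False
    then show ?thesis using i0 by (simp add: coord_eq_def w_def \<alpha>_def)
  qed
  have ce2: "coord_eq n m (i0+1) (v (i0+1)) (w (i0+1)) d"
  proof (cases "i0 = m")
    case True
    then have "w (i0+1) = v (i0+1) - d + \<beta>" by (simp add: w_def)
    then show ?thesis using True db
      by (simp add: coord_eq_def mod_eq_dvd_iff)
  next
    case False
    then show ?thesis using i0 by (simp add: coord_eq_def w_def \<beta>_def)
  qed
  have same: "\<forall>j\<le>m+1. j \<notin> {i0, i0+1} \<longrightarrow> v j = w j" by (simp add: w_def)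
  have adj: "Zadj n m v w"
    unfolding Zadj_def using vv zw i0 same ce1 ce2 d by auto
  have pw: "\<forall>i\<le>m. pre w i = pre v i + (if i = i0 then d else 0) + \<alpha>"
  proof (intro allI impI)
    fix i assume im: "i \<le> m"
    have "pre w i = pre v i + (if i0 \<le> i then d + \<alpha> else 0) + (if Suc i0 \<le> i then \<beta> - d else 0)"
      by (simp add: pre_def w_def sum.distrib)
    also have "\<dots> = pre v i + (if i = i0 then d else 0) + \<alpha>"
      using im by (auto simp: \<alpha>_def \<beta>_def)
    finally show "pre w i = pre v i + (if i = i0 then d else 0) + \<alpha>" .
  qed
  show ?thesis using adj da pw by blast
qed

lemma pre_Suc: "pre v (Suc i) = pre v i + v (Suc i)" by (simp add: pre_def)
lemma pre_0: "pre v 0 = v 0" by (simp add: pre_def)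

lemma Lsum_nonneg: "0 \<le> Lsum m v K" unfolding Lsum_def by (simp add: sum_nonneg)

lemma mid_bound: "Zvert n m v \<Longrightarrow> 1 \<le> i \<Longrightarrow> i \<le> m \<Longrightarrow> v i \<in> {-1,0,1}"
  by (simp add: Zvert_def)

lemma zero_vert:
  assumes vv: "Zvert n m v" and n1: "1 < n" and K: "int n dvd K" and all: "\<forall>i\<le>m. pre v i = K"
  shows "v = Zzero"
proof -
  have v0: "v 0 = K" using all pre_0[of v] by simp
  have "0 \<le> v 0" "v 0 < int n" using vv by (auto simp: Zvert_def)
  then have K0: "K = 0"
  proof -
    assume a: "0 \<le> v 0" "v 0 < int n"
    show "K = 0"
    proof (rule ccontr)
      assume "K \<noteq> 0"
      then have "0 < K" using a v0 by simp
      then have "int n \<le> K" using K zdvd_imp_le by blast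
      then show False using a v0 by simp
    qed
  qed
  have vm: "\<forall>i. 1 \<le> i \<longrightarrow> i \<le> m \<longrightarrow> v i = 0"
  proof (intro allI impI)
    fix i assume "1 \<le> i" "i \<le> m"
    then obtain k where k: "i = Suc k" by (cases i) auto
    then show "v i = 0" using all pre_Suc[of v k] \<open>i \<le> m\<close> by simp
  qed
  have "(\<Sum>i\<le>m+1. v i) = pre v m + v (m+1)" by (simp add: pre_def)
  then have "(\<Sum>i\<le>m+1. v i) = v (m+1)" using all K0 by simp
  then have d: "int n dvd v (m+1)" using vv by (simp add: Zvert_def)
  have "0 \<le> v (m+1)" "v (m+1) < int n" using vv by (auto simp: Zvert_def)
  then have vM: "v (m+1) = 0"
  proof -
    assume a: "0 \<le> v (m+1)" "v (m+1) < int n"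
    show "v (m+1) = 0"
    proof (rule ccontr)
      assume "v (m+1) \<noteq> 0"
      then have "0 < v (m+1)" using a by simp
      then have "int n \<le> v (m+1)" using d zdvd_imp_le by blast
      then show False using a by simp
    qed
  qed
  show ?thesis
  proof
    fix i show "v i = Zzero i"
    proof (cases "i = 0")
      case True then show ?thesis using v0 K0 by (simp add: Zzero_def)
    next
      case False
      show ?thesis
      proof (cases "i \<le> m")
        case True then show ?thesis using vm False by (simp add: Zzero_def)
      next
        case False
        then show ?thesis using vM vv
          by (cases "i = m+1") (auto simp: Zzero_def Zvert_def)
      qed
    qed
  qed
qed

lemma sum_dec:
  assumes "finite A" "i0 \<in> A"
  shows "(\<Sum>i\<in>A. (f i - (if i = i0 then 1 else 0))) = (\<Sum>i\<in>A. f i) - (1::int)"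
  using assms by (simp add: sum_subtractf)

lemma step:
  assumes vv: "Zvert n m v" and n1: "1 < n" and m1: "1 \<le> m" and K: "int n dvd K"
    and pos: "0 < Lsum m v K"
  shows "\<exists>w K'. Zadj n m v w \<and> int n dvd K' \<and> Lsum m w K' = Lsum m v K - 1"
proof -
  have fin: "finite (pre v ` {..m})" "pre v ` {..m} \<noteq> {}" by auto
  obtain i0 where i0: "i0 \<le> m" "pre v i0 = Max (pre v ` {..m})"
    using Max_in[OF fin] by (metis atMost_iff imageE)
  have imax: "\<forall>i\<le>m. pre v i \<le> pre v i0" using i0 fin by simp
  show ?thesis
  proof (cases "K < pre v i0")
    case True
    have l: "v i0 + (-1) \<in> {-1,0,1}" if h1: "1 \<le> i0"
    proof -
      obtain k where k: "i0 = Suc k" using h1 by (cases i0) auto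
      have "pre v k \<le> pre v i0" using imax i0 k by simp
      then have "0 \<le> v i0" using pre_Suc[of v k] k by simp
      moreover have "v i0 \<in> {-1,0,1}" using mid_bound[OF vv h1 i0(1)] .
      ultimately show ?thesis by auto
    qed
    have r: "v (Suc i0) - (-1) \<in> {-1,0,1}" if "i0 < m"
    proof -
      have "pre v (Suc i0) \<le> pre v i0" using imax that by simp
      then have "v (Suc i0) \<le> 0" using pre_Suc[of v i0] by simp
      moreover have "v (Suc i0) \<in> {-1,0,1}" using mid_bound[OF vv _ ] that by simp
      ultimately show ?thesis by auto
    qed
    obtain w \<alpha> where w: "Zadj n m v w" "int n dvd \<alpha>"
      "\<forall>i\<le>m. pre w i = pre v i + (if i = i0 then -1 else 0) + \<alpha>"
      using move[OF vv n1 m1 i0(1), of "-1"] l r by auto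
    have "Lsum m w (K + \<alpha>) = (\<Sum>i\<le>m. (\<bar>pre v i - K\<bar> - (if i = i0 then 1 else 0)))"
      unfolding Lsum_def
      by (rule sum.cong) (use w(3) True in auto)
    also have "\<dots> = Lsum m v K - 1" unfolding Lsum_def using i0 by (simp add: sum_dec)
    finally show ?thesis using w K by (meson dvd_add)
  next
    case False
    then have allle: "\<forall>i\<le>m. pre v i \<le> K" using imax by force
    obtain j where j: "j \<le> m" "pre v j \<noteq> K"
    proof (rule ccontr)
      assume "\<not> thesis"
      then have "\<forall>i\<le>m. pre v i = K" using that by blast
      then have "Lsum m v K = 0" by (simp add: Lsum_def)
      then show False using pos by simp
    qed
    obtain j0 where j0: "j0 \<le> m" "pre v j0 = Min (pre v ` {..m})"
      using Min_in[OF fin] by (metis atMost_iff imageE)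
    have jmin: "\<forall>i\<le>m. pre v j0 \<le> pre v i" using j0 fin by simp
    have lt: "pre v j0 < K" using jmin j allle by force
    have l: "v j0 + 1 \<in> {-1,0,1}" if h1: "1 \<le> j0"
    proof -
      obtain k where k: "j0 = Suc k" using h1 by (cases j0) auto
      have "pre v j0 \<le> pre v k" using jmin j0 k by simp
      then have "v j0 \<le> 0" using pre_Suc[of v k] k by simp
      moreover have "v j0 \<in> {-1,0,1}" using mid_bound[OF vv h1 j0(1)] .
      ultimately show ?thesis by auto
    qed
    have r: "v (Suc j0) - 1 \<in> {-1,0,1}" if "j0 < m"
    proof -
      have "pre v j0 \<le> pre v (Suc j0)" using jmin that by simp
      then have "0 \<le> v (Suc j0)" using pre_Suc[of v j0] by simp
      moreover have "v (Suc j0) \<in> {-1,0,1}" using mid_bound[OF vv _ ] that by simp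
      ultimately show ?thesis by auto
    qed
    obtain w \<alpha> where w: "Zadj n m v w" "int n dvd \<alpha>"
      "\<forall>i\<le>m. pre w i = pre v i + (if i = j0 then 1 else 0) + \<alpha>"
      using move[OF vv n1 m1 j0(1), of "1"] l r by auto
    have "Lsum m w (K + \<alpha>) = (\<Sum>i\<le>m. (\<bar>pre v i - K\<bar> - (if i = j0 then 1 else 0)))"
      unfolding Lsum_def
      by (rule sum.cong) (use w(3) lt in auto)
    also have "\<dots> = Lsum m v K - 1" unfolding Lsum_def using j0 by (simp add: sum_dec)
    finally show ?thesis using w K by (meson dvd_add)
  qed
qed

lemma walk_aux:
  assumes n1: "1 < n" and m1: "1 \<le> m"
  shows "\<forall>v K. Zvert n m v \<longrightarrow> int n dvd K \<longrightarrow> nat (Lsum m v K) = N \<longrightarrow> Zwalk n m v Zzero N"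
proof (induction N)
  case 0
  show ?case
  proof (intro allI impI)
    fix v K assume vv: "Zvert n m v" and K: "int n dvd K" and z: "nat (Lsum m v K) = 0"
    then have "Lsum m v K = 0" using Lsum_nonneg[of m v K] by simp
    then have "\<forall>i\<le>m. pre v i = K" unfolding Lsum_def
      by (subst (asm) sum_nonneg_eq_0_iff) auto
    then have "v = Zzero" using zero_vert[OF vv n1 K] by simp
    then show "Zwalk n m v Zzero 0" using zwalk_zero[OF vv] by simp
  qed
next
  case (Suc N)
  show ?case
  proof (intro allI impI)
    fix v K assume vv: "Zvert n m v" and K: "int n dvd K" and z: "nat (Lsum m v K) = Suc N"
    then have pos: "0 < Lsum m v K" by simp
    obtain w K' where w: "Zadj n m v w" "int n dvd K'" "Lsum m w K' = Lsum m v K - 1"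
      using step[OF vv n1 m1 K pos] by blast
    have "Zvert n m w" using w(1) by (simp add: Zadj_def)
    moreover have "nat (Lsum m w K') = N" using w(3) z by simp
    ultimately have "Zwalk n m w Zzero N" using Suc.IH w(2) by blast
    then show "Zwalk n m v Zzero (Suc N)" using zwalk_cons[OF w(1)] by blast
  qed
qed

lemma dist_bound:
  assumes "Zvert n m v" "1 < n" "1 \<le> m" "int n dvd K"
  shows "Zdist n m v Zzero \<le> enat (nat (Lsum m v K))"
proof -
  have "Zwalk n m v Zzero (nat (Lsum m v K))" using walk_aux[OF assms(2,3)] assms by blast
  then show ?thesis unfolding Zdist_def by (simp add: INF_lower)
qed

lemma sum_int_nat: "(\<Sum>i\<in>{0..int k}. f (nat i)) = (\<Sum>i\<le>k. f i)"
proof -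
  have "{0..int k} = int ` {0..k}" by (simp add: image_int_atLeastAtMost)
  then have "(\<Sum>i\<in>{0..int k}. f (nat i)) = (\<Sum>i\<in>{0..k}. f (nat (int i)))"
    by (simp add: sum.reindex)
  then show ?thesis by (simp add: atLeast0AtMost)
qed

lemma pre_step: "Zvert n m v \<Longrightarrow> k < m \<Longrightarrow> \<bar>pre v (Suc k) - pre v k\<bar> \<le> 1"
  using mid_bound[of n m v "Suc k"] by (auto simp: pre_Suc)

lemma lip: assumes vv: "Zvert n m v" shows "i \<le> j \<Longrightarrow> j \<le> m \<Longrightarrow> \<bar>pre v j - pre v i\<bar> \<le> int j - int i"
proof (induction j)
  case 0 then show ?case by simp
next
  case (Suc j)
  show ?case
  proof (cases "i = Suc j")
    case True then show ?thesis by simp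
  next
    case False
    then have "i \<le> j" using Suc by simp
    then have "\<bar>pre v j - pre v i\<bar> \<le> int j - int i" using Suc by simp
    moreover have "\<bar>pre v (Suc j) - pre v j\<bar> \<le> 1" using pre_step[OF vv, of j] Suc by simp
    ultimately show ?thesis by simp
  qed
qed

lemma ivt:
  fixes f :: "nat \<Rightarrow> int"
  assumes st: "\<forall>k. i \<le> k \<longrightarrow> k < j \<longrightarrow> \<bar>f (Suc k) - f k\<bar> \<le> 1"
  shows "i \<le> j \<Longrightarrow> f i \<le> c \<Longrightarrow> c \<le> f j \<Longrightarrow> \<exists>k. i \<le> k \<and> k \<le> j \<and> f k = c"
  using st
proof (induction j)
  case 0 then show ?case by auto
next
  case (Suc j)
  show ?case
  proof (cases "i = Suc j")
    case True then show ?thesis using Suc by auto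
  next
    case False
    then have ij: "i \<le> j" using Suc by simp
    show ?thesis
    proof (cases "c \<le> f j")
      case True
      then show ?thesis using Suc.IH[OF ij Suc.prems(2) True] Suc.prems(4) by fastforce
    next
      case False
      then have "c = f (Suc j)" using Suc.prems(3,4) ij by force
      then show ?thesis using Suc.prems by auto
    qed
  qed
qed

lemma gauss: "-1 \<le> (a::int) \<Longrightarrow> 2 * (\<Sum>i\<in>{1..a}. i) = a * (a + 1)"
proof -
  have g: "2 * (\<Sum>i\<in>{1..int k}. i) = int k * (int k + 1)" for k
  proof (induction k)
    case 0 then show ?case by simp
  next
    case (Suc k)
    have "{1..int (Suc k)} = insert (1 + int k) {1..int k}"
      using atLeastAtMostPlus1_int_conv[of 1 "int k"] by simp
    then have "(\<Sum>i\<in>{1..int (Suc k)}. i) = (1 + int k) + (\<Sum>i\<in>{1..int k}. i)" by simp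
    then show ?case using Suc.IH by (simp add: algebra_simps)
  qed
  assume "-1 \<le> a"
  then consider "a = -1" | "0 \<le> a" by linarith
  then show ?thesis
  proof cases
    case 1 then show ?thesis by simp
  next
    case 2 then show ?thesis using g[of "nat a"] by simp
  qed
qed

lemma left_sum: "\<forall>a. -1 \<le> a \<longrightarrow> a \<le> int m \<longrightarrow> 2 * (\<Sum>i\<le>m. max 0 (a - int i)) = a * (a + 1)"
proof (induction m)
  case 0
  show ?case
  proof (intro allI impI)
    fix a :: int assume "-1 \<le> a" "a \<le> int 0"
    then have "a = -1 \<or> a = 0" by linarith
    then show "2 * (\<Sum>i\<le>0. max 0 (a - int i)) = a * (a + 1)" by auto
  qed
next
  case (Suc m)
  show ?case
  proof (intro allI impI)
    fix a :: int assume a: "-1 \<le> a" "a \<le> int (Suc m)"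
    have sh: "(\<Sum>i\<le>Suc m. max 0 (a - int i)) = max 0 a + (\<Sum>i\<le>m. max 0 ((a - 1) - int i))"
      by (subst sum.atMost_Suc_shift) (simp add: algebra_simps)
    show "2 * (\<Sum>i\<le>Suc m. max 0 (a - int i)) = a * (a + 1)"
    proof (cases "a = -1")
      case True
      then show ?thesis by (simp add: sum_nonneg_eq_0_iff)
    next
      case False
      then have "-1 \<le> a - 1" "a - 1 \<le> int m" using a by auto
      then have "2 * (\<Sum>i\<le>m. max 0 ((a - 1) - int i)) = (a - 1) * a" using Suc.IH by auto
      then show ?thesis unfolding sh using False a by (simp add: algebra_simps)
    qed
  qed
qed

lemma right_sum: "\<forall>b. 0 \<le> b \<longrightarrow> b \<le> int m + 1 \<longrightarrow>
   2 * (\<Sum>i\<le>m. max 0 (int i - b)) = (int m - b) * (int m - b + 1)"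
proof (induction m)
  case 0
  show ?case
  proof (intro allI impI)
    fix b :: int assume "0 \<le> b" "b \<le> int 0 + 1"
    then have "b = 0 \<or> b = 1" by linarith
    then show "2 * (\<Sum>i\<le>0. max 0 (int i - b)) = (int 0 - b) * (int 0 - b + 1)" by auto
  qed
next
  case (Suc m)
  show ?case
  proof (intro allI impI)
    fix b :: int assume b: "0 \<le> b" "b \<le> int (Suc m) + 1"
    show "2 * (\<Sum>i\<le>Suc m. max 0 (int i - b)) = (int (Suc m) - b) * (int (Suc m) - b + 1)"
    proof (cases "b = int m + 2")
      case True
      have "\<forall>i\<in>{..Suc m}. max 0 (int i - b) = 0" using True by auto
      then have "(\<Sum>i\<le>Suc m. max 0 (int i - b)) = 0" by simp
      then show ?thesis using True by simp
    next
      case False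
      then have "b \<le> int m + 1" using b by simp
      then have "2 * (\<Sum>i\<le>m. max 0 (int i - b)) = (int m - b) * (int m - b + 1)"
        using Suc.IH b by auto
      moreover have "max 0 (int (Suc m) - b) = int (Suc m) - b" using \<open>b \<le> int m + 1\<close> by simp
      ultimately show ?thesis by (simp add: algebra_simps)
    qed
  qed
qed

theorem lemma5p25:
  fixes n m :: nat and v :: "nat \<Rightarrow> int"
  assumes "1 < n" and "n \<le> m"
    and "Zvert n m v"
    and "(\<Sum>i\<in>I_c n m v. v (nat i)) = int n"
  shows "Zdist n m v Zzero \<le>
    enat (nat ((\<Sum>i\<in>{1..p_l n m v}. i) + (\<Sum>i\<in>{1..int m - p_r n m v}. i)
               + (int n * (int m + 1)) div 2))"
proof -
  note n1 = assms(1) and vv = assms(3)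
  have m1: "1 \<le> m" using assms(1,2) by simp
  define a where "a = p_l n m v"
  define b where "b = p_r n m v"
  define S where "S = (\<lambda>p::int. \<Sum>i\<in>{0..p}. v (nat i))"
  have Spre: "S (int k) = pre v k" for k
    unfolding S_def pre_def by (rule sum_int_nat)
  have finP: "finite (Piv n m v)"
    by (rule finite_subset[of _ "{-1..int m + 1}"]) (auto simp: Piv_def)
  have m1P: "-1 \<in> Piv n m v" by (simp add: Piv_def)
  have "S (int (m+1)) = pre v (m+1)" by (rule Spre)
  then have "S (int (m+1)) = (\<Sum>i\<le>m+1. v i)" by (simp only: pre_def)
  then have "int n dvd S (int (m+1))" using vv by (simp add: Zvert_def)
  then have "int n dvd S (int m + 1)" by (simp add: add.commute)
  then have mP: "int m + 1 \<in> Piv n m v" by (simp add: Piv_def S_def)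
  define SL where "SL = {p \<in> Piv n m v. 2 * p < int m}"
  define SR where "SR = {p \<in> Piv n m v. 2 * p \<ge> int m}"
  have finL: "finite SL" "SL \<noteq> {}" using finP m1P by (auto simp: SL_def)
  have finR: "finite SR" "SR \<noteq> {}" using finP mP by (auto simp: SR_def)
  have aL: "a \<in> SL" using Max_in[OF finL] by (simp add: a_def p_l_def SL_def)
  have aM: "\<forall>p\<in>SL. p \<le> a" using Max_ge[OF finL(1)] by (simp add: a_def p_l_def SL_def)
  have bR: "b \<in> SR" using Min_in[OF finR] by (simp add: b_def p_r_def SR_def)
  have bM: "\<forall>p\<in>SR. b \<le> p" using Min_le[OF finR(1)] by (simp add: b_def p_r_def SR_def)
  have a1: "-1 \<le> a" "2 * a < int m" "int n dvd S a" using aL by (auto simp: SL_def Piv_def S_def)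
  have b1: "b \<le> int m + 1" "int m \<le> 2 * b" "int n dvd S b" using bR by (auto simp: SR_def Piv_def S_def)
  have ab: "a < b" using a1 b1 by linarith
  have noPiv: "\<not> int n dvd pre v k" if k: "a < int k" "int k < b" "k \<le> m" for k
  proof
    assume d: "int n dvd pre v k"
    then have kP: "int k \<in> Piv n m v" using k by (simp add: Piv_def flip: Spre add: S_def)
    show False
    proof (cases "2 * int k < int m")
      case True then have "int k \<in> SL" using kP by (simp add: SL_def)
      then show False using aM k by force
    next
      case False then have "int k \<in> SR" using kP by (simp add: SR_def)
      then show False using bM k by force
    qed
  qed
  define A where "A = S a"
  define B where "B = S b"
  have "{0..b} = {0..a} \<union> {a+1..b}" using ab a1 by auto
  then have "S b = S a + (\<Sum>i\<in>{a+1..b}. v (nat i))" unfolding S_def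
    by (simp add: sum.union_disjoint)
  then have BA: "B = A + int n" using assms(4) by (simp add: A_def B_def I_c_def a_def b_def)
  have Aa: "A = pre v (nat a)" if "0 \<le> a" using that Spre[of "nat a"] by (simp add: A_def)
  have Am: "A = 0" if "a = -1" using that by (simp add: A_def S_def)
  have Bb: "B = pre v (nat b)" if "b \<le> int m" using Spre[of "nat b"] ab a1 by (simp add: B_def)
  have Bm: "B = pre v m + v (m+1)" if "b = int m + 1"
  proof -
    have "S (int (m+1)) = pre v (m+1)" by (rule Spre)
    then show ?thesis using that by (simp add: B_def pre_Suc add.commute)
  qed
  have stp: "\<forall>k. i \<le> k \<longrightarrow> k < j \<longrightarrow> \<bar>pre v (Suc k) - pre v k\<bar> \<le> 1" if "j \<le> m" for i j
    using pre_step[OF vv] that by auto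
  have nA: "int n dvd A" "int n dvd B" using a1 b1 by (simp_all add: A_def B_def)
  have pt: "\<bar>pre v i - A\<bar> + \<bar>pre v i - B\<bar> \<le> int n + 2 * max 0 (a - int i) + 2 * max 0 (int i - b)"
    if im: "i \<le> m" for i
  proof -
    consider "int i \<le> a" | "b \<le> int i" | "a < int i" "int i < b" by linarith
    then show ?thesis
    proof cases
      case 1
      then have "\<bar>pre v (nat a) - pre v i\<bar> \<le> int (nat a) - int i"
        using lip[OF vv, of i "nat a"] a1 by linarith
      moreover have "0 \<le> a" using 1 by simp
      ultimately have h: "\<bar>pre v i - A\<bar> \<le> a - int i" using Aa by auto
      have "max 0 (a - int i) = a - int i" "max 0 (int i - b) = 0" using 1 ab by auto
      moreover have "\<bar>pre v i - B\<bar> \<le> \<bar>pre v i - A\<bar> + int n"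
        "\<bar>pre v i - A\<bar> \<le> \<bar>pre v i - B\<bar> + int n" using BA by (auto simp: abs_if)
      ultimately show ?thesis using h by linarith
    next
      case 2
      then have "\<bar>pre v i - pre v (nat b)\<bar> \<le> int i - int (nat b)"
        using lip[OF vv, of "nat b" i] im ab a1 by linarith
      moreover have "0 \<le> b" "b \<le> int m" using 2 b1 im by linarith+
      ultimately have h: "\<bar>pre v i - B\<bar> \<le> int i - b" using Bb by auto
      have "max 0 (a - int i) = 0" "max 0 (int i - b) = int i - b" using 2 ab by auto
      moreover have "\<bar>pre v i - B\<bar> \<le> \<bar>pre v i - A\<bar> + int n"
        "\<bar>pre v i - A\<bar> \<le> \<bar>pre v i - B\<bar> + int n" using BA by (auto simp: abs_if)
      ultimately show ?thesis using h by linarith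
    next
      case 3
      have lo: "A \<le> pre v i"
      proof (rule ccontr)
        assume lt: "\<not> A \<le> pre v i"
        show False
        proof (cases "b \<le> int m")
          case True
          have "pre v i \<le> A" "A \<le> pre v (nat b)" "i \<le> nat b" using lt Bb[OF True] BA 3 by auto
          then obtain k where k: "i \<le> k" "k \<le> nat b" "pre v k = A"
            using ivt[OF stp[of "nat b" i]] True by (metis nat_le_iff)
          have "k \<noteq> i" using k lt by auto
          moreover have "k \<noteq> nat b" using k Bb[OF True] BA n1 by auto
          ultimately have "i < k" "int k < b" using k by arith+
          moreover have "k \<le> m" using k True by arith
          ultimately show False using noPiv[of k] k 3 nA by auto
        next
          case False
          then have bm: "b = int m + 1" using b1 by simp
          have "v (m+1) < int n" using vv by (simp add: Zvert_def)
          then have Am': "A \<le> pre v m" using Bm[OF bm] BA by simp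
          have "\<exists>k. i \<le> k \<and> k \<le> m \<and> pre v k = A"
            by (rule ivt[OF stp[of m i]]) (use lt im Am' in auto)
          then obtain k where k: "i \<le> k" "k \<le> m" "pre v k = A" by blast
          have "k \<noteq> i" using k lt by auto
          then have "i < k" "int k < b" using k bm by arith+
          then show False using noPiv[of k] k 3 nA by auto
        qed
      qed
      have hi: "pre v i \<le> B"
      proof (rule ccontr)
        assume lt: "\<not> pre v i \<le> B"
        show False
        proof (cases "0 \<le> a")
          case True
          have h: "pre v (nat a) \<le> B" "B \<le> pre v i" "nat a \<le> i" using lt Aa[OF True] BA 3 by auto
          have "\<exists>k. nat a \<le> k \<and> k \<le> i \<and> pre v k = B"
            by (rule ivt[OF stp[of i "nat a"]]) (use h im in auto)
          then obtain k where k: "nat a \<le> k" "k \<le> i" "pre v k = B" by blast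
          have "k \<noteq> i" using k lt by auto
          moreover have "k \<noteq> nat a" using k Aa[OF True] BA n1 by auto
          ultimately have "a < int k" "k < i" "k \<le> m" using k True im by arith+
          then show False using noPiv[of k] k 3 nA by auto
        next
          case False
          then have am: "a = -1" using a1 by simp
          have "v 0 < int n" using vv by (simp add: Zvert_def)
          then have "pre v 0 \<le> B" using Am[OF am] BA by (simp add: pre_0)
          then have h: "pre v 0 \<le> B" .
          have "\<exists>k. 0 \<le> k \<and> k \<le> i \<and> pre v k = B"
            by (rule ivt[OF stp[of i 0]]) (use h lt im in auto)
          then obtain k where k: "0 \<le> k" "k \<le> i" "pre v k = B" by blast
          have "k \<noteq> i" using k lt by auto
          then have "a < int k" "k < i" "k \<le> m" using k am im by arith+
          then show False using noPiv[of k] k 3 nA by auto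
        qed
      qed
      show ?thesis using lo hi BA by auto
    qed
  qed
  define T1 where "T1 = (\<Sum>i\<in>{1..a}. i)"
  define T2 where "T2 = (\<Sum>i\<in>{1..int m - b}. i)"
  have t1: "2 * (\<Sum>i\<le>m. max 0 (a - int i)) = 2 * T1"
    using left_sum[of m] gauss[of a] a1 unfolding T1_def by simp
  have t2: "2 * (\<Sum>i\<le>m. max 0 (int i - b)) = 2 * T2"
    using right_sum[of m] gauss[of "int m - b"] b1 ab a1 unfolding T2_def by simp
  have "Lsum m v A + Lsum m v B = (\<Sum>i\<le>m. \<bar>pre v i - A\<bar> + \<bar>pre v i - B\<bar>)"
    by (simp add: Lsum_def sum.distrib)
  also have "\<dots> \<le> (\<Sum>i\<le>m. int n + 2 * max 0 (a - int i) + 2 * max 0 (int i - b))"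
    by (rule sum_mono) (use pt in auto)
  also have "\<dots> = (int m + 1) * int n + 2 * (\<Sum>i\<le>m. max 0 (a - int i)) + 2 * (\<Sum>i\<le>m. max 0 (int i - b))"
    by (simp add: sum.distrib sum_distrib_left)
  finally have tot: "Lsum m v A + Lsum m v B \<le> int n * (int m + 1) + 2 * T1 + 2 * T2"
    using t1 t2 by (simp add: algebra_simps)
  define X where "X = T1 + T2 + int n * (int m + 1) div 2"
  have dv: "int n * (int m + 1) \<le> 2 * (int n * (int m + 1) div 2) + 1" by linarith
  have "Lsum m v A \<le> X \<or> Lsum m v B \<le> X" using tot dv unfolding X_def by linarith
  moreover have "Zdist n m v Zzero \<le> enat (nat (Lsum m v A))" by (rule dist_bound[OF vv n1 m1 nA(1)])
  moreover have "Zdist n m v Zzero \<le> enat (nat (Lsum m v B))" by (rule dist_bound[OF vv n1 m1 nA(2)])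
  ultimately have "Zdist n m v Zzero \<le> enat (nat X)"
    by (meson enat_ord_simps(1) nat_mono order_trans)
  then show ?thesis unfolding X_def T1_def T2_def a_def b_def .
qed

end
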